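(* Let $(\theta_1,\mathbf{X}_1),\dots,(\theta_B,\mathbf{X}_B)$ be i.i.d. with $\theta_b \sim r$, where $r$ has a density with $r(\theta)>0$ on $\Theta$, and $\mathbf{X}_b\mid\theta_b$ distributed according to the statistical model at $\theta_b$. Let $\mathcal{A}_B$ be the (data-dependent) partition of $\Theta$ produced by TRUST or TRUST++ from these simulations, and for $\theta'\in\Theta$ let $A(\theta')$ be its element containing $\theta'$, $I_{A(\theta')} = \{b : \theta_b \in A(\theta')\}$, $$\widehat H_B(t\mid\theta') = \frac{1}{|I_{A(\theta')}|+1}\Big(\sum_{b\in I_{A(\theta')}}\mathbb{I}\big(\tau(\mathbf{X}_b,\theta_b)\le t\big)+1\Big),$$ $\widehat C_{\theta',B} = \inf\{t:\widehat H_B(t\mid\theta')\ge\alpha\}$, and $\widehat R_B(\mathbf{X}) = \{\theta'\in\Theta : \tau(\mathbf{X},\theta')\ge \widehat C_{\theta',B}\}$. Assume the uniform consistency condition: for every $\varepsilon>0$ and $\delta>0$ there is $B_0$ such that for all $B\ge B_0$, $$\mathbb{P}\Big(\sup_{t\in\mathbb{R},\,\theta'\in\Theta}\big|\widehat H_B(t\mid\theta') - H(t\mid\theta')\big|\le\varepsilon\Big)\ge 1-\delta.$$ Then for every fixed $\theta\in\Theta$, with $\mathbf{X}$ drawn from the model at $\theta$ independently of the simulations, $$\lim_{B\to\infty}\mathbb{P}\big(\theta\in\widehat R_B(\mathbf{X})\mid\theta\big) = 1-\alpha.$$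
   Context: A statistical model gives, for each parameter $\theta\in\Theta$, a distribution of the data $\mathbf{X}\in\mathcal{X}$; $\alpha\in(0,1)$. A fixed measurable function $\tau:\mathcal{X}\times\Theta\to\mathbb{R}$ (a test statistic) is given; $H(t\mid\theta) := \mathbb{P}(\tau(\mathbf{X},\theta)\le t\mid\theta)$ is continuous in $t$ for every $\theta$. TRUST: a regression tree is fit with input $\theta$ and response $\tau(\mathbf{X},\theta)$ on the pairs $(\theta_b,\tau(\mathbf{X}_b,\theta_b))$; its leaves form a partition of $\Theta$. TRUST++: $K$ such regression trees are fit on bootstrap resamples of the simulated data, and two parameters $\theta,\theta'$ are placed in the same partition element iff they fall in the same leaf in all $K$ trees. In both cases the partition has the property that $\widehat H_B(\cdot\mid\theta') = \widehat H_B(\cdot\mid\theta)$ whenever $\theta'\in A(\theta)$. *)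

theory Defs
  imports "HOL-Probability.Probability"
begin

definition param_space :: "'t::euclidean_space set \<Rightarrow> 't measure" where
  "param_space \<Theta> = restrict_space lborel \<Theta>"

definition prior :: "'t::euclidean_space set \<Rightarrow> ('t \<Rightarrow> real) \<Rightarrow> 't measure" where
  "prior \<Theta> r = density (param_space \<Theta>) (\<lambda>\<theta>. ennreal (r \<theta>))"

definition joint :: "'t::euclidean_space set \<Rightarrow> ('t \<Rightarrow> real) \<Rightarrow> 'x measure \<Rightarrow> ('t \<Rightarrow> 'x measure)
    \<Rightarrow> ('t \<times> 'x) measure" where
  "joint \<Theta> r XM P =
     bind (prior \<Theta> r) (\<lambda>\<theta>. bind (P \<theta>) (\<lambda>x. return (param_space \<Theta> \<Otimes>\<^sub>M XM) (\<theta>, x)))"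

definition sims :: "'t::euclidean_space set \<Rightarrow> ('t \<Rightarrow> real) \<Rightarrow> 'x measure \<Rightarrow> ('t \<Rightarrow> 'x measure)
    \<Rightarrow> nat \<Rightarrow> (nat \<Rightarrow> 't \<times> 'x) measure" where
  "sims \<Theta> r XM P B = PiM {..<B} (\<lambda>_. joint \<Theta> r XM P)"

definition Hmodel :: "('t \<Rightarrow> 'x measure) \<Rightarrow> ('x \<Rightarrow> 't \<Rightarrow> real) \<Rightarrow> real \<Rightarrow> 't \<Rightarrow> real" where
  "Hmodel P \<tau> t \<theta> = measure (P \<theta>) {x \<in> space (P \<theta>). \<tau> x \<theta> \<le> t}"

text \<open>A B s theta' is the element of the data-dependent partition (built from the
  simulation s of size B) that contains theta'.  I_{A(theta')}:\<close>

definition Iset :: "(nat \<Rightarrow> (nat \<Rightarrow> 't \<times> 'x) \<Rightarrow> 't \<Rightarrow> 't set) \<Rightarrow> nat \<Rightarrow> (nat \<Rightarrow> 't \<times> 'x)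
    \<Rightarrow> 't \<Rightarrow> nat set" where
  "Iset A B s \<theta>' = {b. b < B \<and> fst (s b) \<in> A B s \<theta>'}"

definition Hhat :: "('x \<Rightarrow> 't \<Rightarrow> real) \<Rightarrow> (nat \<Rightarrow> (nat \<Rightarrow> 't \<times> 'x) \<Rightarrow> 't \<Rightarrow> 't set) \<Rightarrow> nat
    \<Rightarrow> (nat \<Rightarrow> 't \<times> 'x) \<Rightarrow> real \<Rightarrow> 't \<Rightarrow> real" where
  "Hhat \<tau> A B s t \<theta>' =
     (real (card {b \<in> Iset A B s \<theta>'. \<tau> (snd (s b)) (fst (s b)) \<le> t}) + 1)
       / (real (card (Iset A B s \<theta>')) + 1)"

definition Chat :: "('x \<Rightarrow> 't \<Rightarrow> real) \<Rightarrow> (nat \<Rightarrow> (nat \<Rightarrow> 't \<times> 'x) \<Rightarrow> 't \<Rightarrow> 't set) \<Rightarrow> real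
    \<Rightarrow> nat \<Rightarrow> (nat \<Rightarrow> 't \<times> 'x) \<Rightarrow> 't \<Rightarrow> ereal" where
  "Chat \<tau> A \<alpha> B s \<theta>' = Inf {ereal t | t. Hhat \<tau> A B s t \<theta>' \<ge> \<alpha>}"

definition Rhat :: "'t set \<Rightarrow> ('x \<Rightarrow> 't \<Rightarrow> real) \<Rightarrow> (nat \<Rightarrow> (nat \<Rightarrow> 't \<times> 'x) \<Rightarrow> 't \<Rightarrow> 't set)
    \<Rightarrow> real \<Rightarrow> nat \<Rightarrow> (nat \<Rightarrow> 't \<times> 'x) \<Rightarrow> 'x \<Rightarrow> 't set" where
  "Rhat \<Theta> \<tau> A \<alpha> B s x = {\<theta>' \<in> \<Theta>. ereal (\<tau> x \<theta>') \<ge> Chat \<tau> A \<alpha> B s \<theta>'}"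

end

theory Submission
  imports Defs
begin

lemma Inf_ereal_le_iff:
  fixes F :: "real \<Rightarrow> bool"
  assumes mono: "\<And>t t'. t \<le> t' \<Longrightarrow> F t \<Longrightarrow> F t'"
  shows "Inf {ereal t | t. F t} \<le> ereal y \<longleftrightarrow> (\<forall>q::rat. y < of_rat q \<longrightarrow> F (of_rat q))"
proof
  assume h: "Inf {ereal t | t. F t} \<le> ereal y"
  show "\<forall>q::rat. y < of_rat q \<longrightarrow> F (of_rat q)"
  proof (intro allI impI)
    fix q :: rat assume "y < of_rat q"
    then have "ereal y < ereal (of_rat q)" by simp
    then have "Inf {ereal t | t. F t} < ereal (of_rat q)" using h by (meson order_le_less_trans)
    then obtain e where "e \<in> {ereal t | t. F t}" "e < ereal (of_rat q)" by (meson Inf_less_iff)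
    then obtain t where "F t" "t < of_rat q" by auto
    then show "F (of_rat q)" using mono[of t "of_rat q"] by auto
  qed
next
  assume h: "\<forall>q::rat. y < of_rat q \<longrightarrow> F (of_rat q)"
  show "Inf {ereal t | t. F t} \<le> ereal y"
    unfolding Inf_le_iff
  proof (intro allI impI)
    fix z assume z: "ereal y < z"
    obtain w where w: "y < w" "ereal w < z"
    proof (cases z)
      case (real r) then show ?thesis using z that[of "(y+r)/2"] by auto
    next
      case PInf then show ?thesis using that[of "y+1"] by auto
    next
      case MInf then show ?thesis using z by auto
    qed
    obtain q where q: "q \<in> \<rat>" "y < q" "q < w" using Rats_dense_in_real w(1) by blast
    then obtain q' :: rat where "q = of_rat q'" by (auto simp: Rats_def)
    then have "F q" using h q by auto
    moreover have "ereal q < z" using q(3) w(2) by (metis ereal_less(2) less_ereal.simps(1) order.strict_trans)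
    ultimately show "\<exists>a\<in>{ereal t | t. F t}. a < z" by blast
  qed
qed

lemma cont_ge_right:
  fixes f :: "real \<Rightarrow> real"
  assumes "continuous_on UNIV f" "\<And>t. c < t \<Longrightarrow> a \<le> f t"
  shows "a \<le> f c"
proof -
  have "closed {t. a \<le> f t}" by (rule closed_Collect_le) (simp_all add: assms continuous_on_const)
  moreover have "{c<..} \<subseteq> {t. a \<le> f t}" using assms(2) by auto
  ultimately have "closure {c<..} \<subseteq> {t. a \<le> f t}" by (intro closure_minimal)
  then have "{c..} \<subseteq> {t. a \<le> f t}" by simp
  then show ?thesis by auto
qed

lemma cont_le_left:
  fixes f :: "real \<Rightarrow> real"
  assumes "continuous_on UNIV f" "\<And>t. t < c \<Longrightarrow> f t \<le> a"
  shows "f c \<le> a"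
proof -
  have "closed {t. f t \<le> a}" by (rule closed_Collect_le) (simp_all add: assms continuous_on_const)
  moreover have "{..<c} \<subseteq> {t. f t \<le> a}" using assms(2) by auto
  ultimately have "closure {..<c} \<subseteq> {t. f t \<le> a}" by (intro closure_minimal)
  then have "{..c} \<subseteq> {t. f t \<le> a}" by simp
  then show ?thesis by auto
qed

lemma cont_left_close:
  fixes f :: "real \<Rightarrow> real"
  assumes "continuous_on UNIV f" "e > 0"
  shows "\<exists>t<c. f c - e \<le> f t"
proof -
  obtain d where d: "d > 0" "\<And>x'. dist x' c < d \<Longrightarrow> dist (f x') (f c) < e"
    using assms unfolding continuous_on_iff by blast
  have "dist (c - d/2) c < d" using d by (simp add: dist_real_def)
  then have "dist (f (c - d/2)) (f c) < e" using d by blast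
  then have "f c - e \<le> f (c - d/2)" by (auto simp: dist_real_def)
  then show ?thesis using d by (intro exI[of _ "c - d/2"]) auto
qed

lemma (in prob_space) small_left:
  fixes f :: "'a \<Rightarrow> real"
  assumes f: "f \<in> borel_measurable M" and a: "a > 0"
  shows "\<exists>t. prob {x\<in>space M. f x \<le> t} < a"
proof -
  define A where "A n = {x\<in>space M. f x \<le> - real n}" for n
  have "range A \<subseteq> events" unfolding A_def using f by auto
  moreover have "decseq A" unfolding A_def decseq_def by auto
  ultimately have "(\<lambda>n. prob (A n)) \<longlonglongrightarrow> prob (\<Inter>i. A i)" by (rule finite_Lim_measure_decseq)
  moreover have "(\<Inter>i. A i) = {}"
  proof -
    { fix x assume "x \<in> (\<Inter>i. A i)"
      then have "\<forall>n. f x \<le> - real n" unfolding A_def by auto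
      moreover obtain n where "real n > - f x" using reals_Archimedean2 by blast
      ultimately have False by (metis minus_less_iff not_le) }
    then show ?thesis by auto
  qed
  ultimately have "(\<lambda>n. prob (A n)) \<longlonglongrightarrow> 0" by simp
  then have "eventually (\<lambda>n. prob (A n) < a) sequentially" using a by (rule order_tendstoD)
  then obtain n where "prob (A n) < a" by (meson eventually_sequentially order_refl)
  then show ?thesis unfolding A_def by blast
qed

lemma (in prob_space) big_right:
  fixes f :: "'a \<Rightarrow> real"
  assumes f: "f \<in> borel_measurable M" and a: "a < 1"
  shows "\<exists>t. prob {x\<in>space M. f x \<le> t} > a"
proof -
  define A where "A n = {x\<in>space M. f x \<le> real n}" for n
  have "range A \<subseteq> events" unfolding A_def using f by auto
  moreover have "incseq A" unfolding A_def incseq_def by auto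
  ultimately have "(\<lambda>n. prob (A n)) \<longlonglongrightarrow> prob (\<Union>i. A i)" by (rule finite_Lim_measure_incseq)
  moreover have "(\<Union>i. A i) = space M"
  proof -
    { fix x assume "x \<in> space M"
      moreover have "\<exists>n. real n > f x" using reals_Archimedean2 by blast
      ultimately have "\<exists>n. x \<in> A n" unfolding A_def by (auto intro: less_imp_le) }
    then show ?thesis unfolding A_def by auto
  qed
  ultimately have "(\<lambda>n. prob (A n)) \<longlonglongrightarrow> 1" by (simp add: prob_space)
  then have "eventually (\<lambda>n. prob (A n) > a) sequentially" using a by (rule order_tendstoD)
  then obtain n where "prob (A n) > a" by (meson eventually_sequentially order_refl)
  then show ?thesis unfolding A_def by blast
qed


lemma (in prob_space) key:
  fixes f :: "'a \<Rightarrow> real" and Hh H :: "real \<Rightarrow> real"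
  assumes f: "f \<in> borel_measurable M"
    and H: "\<And>t. H t = prob {x\<in>space M. f x \<le> t}"
    and Hc: "continuous_on UNIV H"
    and mono: "\<And>t t'. t \<le> t' \<Longrightarrow> Hh t \<le> Hh t'"
    and close: "\<And>t. \<bar>Hh t - H t\<bar> \<le> \<epsilon>"
    and e: "0 < \<epsilon>" "\<epsilon> < \<alpha>" "\<alpha> + \<epsilon> < 1"
  shows "1 - \<alpha> - \<epsilon> \<le> prob {x\<in>space M. Inf {ereal t | t. \<alpha> \<le> Hh t} \<le> ereal (f x)}"
    and "prob {x\<in>space M. Inf {ereal t | t. \<alpha> \<le> Hh t} \<le> ereal (f x)} \<le> 1 - \<alpha> + 2 * \<epsilon>"
proof -
  define C where "C = Inf {ereal t | t. \<alpha> \<le> Hh t}"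
  have ev: "{x\<in>space M. f x \<le> t} \<in> events" for t using f by measurable
  obtain t1 where t1: "prob {x\<in>space M. f x \<le> t1} > \<alpha> + \<epsilon>" using big_right[OF f e(3)] by blast
  have "\<alpha> \<le> Hh t1" using close[of t1] t1 H[of t1] by linarith
  then have C1: "C \<le> ereal t1" unfolding C_def by (intro Inf_lower) blast
  obtain t0 where t0: "prob {x\<in>space M. f x \<le> t0} < \<alpha> - \<epsilon>" using small_left[OF f, of "\<alpha> - \<epsilon>"] e by auto
  have "t0 \<le> t" if "\<alpha> \<le> Hh t" for t
  proof (rule ccontr)
    assume "\<not> t0 \<le> t"
    then have "Hh t \<le> Hh t0" using mono by auto
    moreover have "Hh t0 < \<alpha>" using close[of t0] t0 H[of t0] by linarith
    ultimately show False using that by linarith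
  qed
  then have C0: "ereal t0 \<le> C" unfolding C_def by (intro Inf_greatest) auto
  define c where "c = real_of_ereal C"
  have Cc: "C = ereal c" using C0 C1 unfolding c_def by (cases C) auto
  have right: "\<alpha> \<le> Hh t" if "c < t" for t
  proof -
    have "C < ereal t" using Cc that by simp
    then obtain e' where "e' \<in> {ereal t | t. \<alpha> \<le> Hh t}" "e' < ereal t" unfolding C_def by (meson Inf_less_iff)
    then obtain t' where "\<alpha> \<le> Hh t'" "t' < t" by auto
    then show ?thesis using mono[of t' t] by auto
  qed
  have left: "Hh t < \<alpha>" if "t < c" for t
  proof (rule ccontr)
    assume "\<not> Hh t < \<alpha>"
    then have "C \<le> ereal t" unfolding C_def by (intro Inf_lower) auto
    then show False using Cc that by simp
  qed
  have Hc1: "\<alpha> - \<epsilon> \<le> H c"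
  proof (rule cont_ge_right[OF Hc])
    fix t assume "c < t"
    then have "\<alpha> \<le> Hh t" by (rule right)
    moreover have "\<bar>Hh t - H t\<bar> \<le> \<epsilon>" by (rule close)
    ultimately show "\<alpha> - \<epsilon> \<le> H t" by linarith
  qed
  have Hc2: "H c \<le> \<alpha> + \<epsilon>"
  proof (rule cont_le_left[OF Hc])
    fix t assume "t < c"
    then have "Hh t < \<alpha>" by (rule left)
    moreover have "\<bar>Hh t - H t\<bar> \<le> \<epsilon>" by (rule close)
    ultimately show "H t \<le> \<alpha> + \<epsilon>" by linarith
  qed
  obtain t2 where t2: "t2 < c" "H c - \<epsilon> \<le> H t2" using cont_left_close[OF Hc e(1)] by blast
  have X: "{x\<in>space M. C \<le> ereal (f x)} = {x\<in>space M. c \<le> f x}" using Cc by auto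
  have "prob {x\<in>space M. c \<le> f x} \<ge> prob (space M - {x\<in>space M. f x \<le> c})"
    by (rule finite_measure_mono) (use f in auto)
  also have "prob (space M - {x\<in>space M. f x \<le> c}) = 1 - H c" using prob_compl[OF ev] H by simp
  finally show "1 - \<alpha> - \<epsilon> \<le> prob {x\<in>space M. Inf {ereal t | t. \<alpha> \<le> Hh t} \<le> ereal (f x)}"
    using X Hc2 unfolding C_def by simp
  have "prob {x\<in>space M. c \<le> f x} \<le> prob (space M - {x\<in>space M. f x \<le> t2})"
    by (rule finite_measure_mono) (use t2 f in auto)
  also have "prob (space M - {x\<in>space M. f x \<le> t2}) = 1 - H t2" using prob_compl[OF ev] H by simp
  finally show "prob {x\<in>space M. Inf {ereal t | t. \<alpha> \<le> Hh t} \<le> ereal (f x)} \<le> 1 - \<alpha> + 2 * \<epsilon>"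
    using X Hc1 t2 unfolding C_def by simp
qed

theorem theorem3:
  fixes \<Theta> :: "'t::euclidean_space set"
    and r :: "'t \<Rightarrow> real"
    and XM :: "'x measure"
    and P :: "'t \<Rightarrow> 'x measure"
    and \<tau> :: "'x \<Rightarrow> 't \<Rightarrow> real"
    and A :: "nat \<Rightarrow> (nat \<Rightarrow> 't \<times> 'x) \<Rightarrow> 't \<Rightarrow> 't set"
    and \<alpha> :: real
    and \<theta> :: 't
  assumes \<Theta>_borel: "\<Theta> \<in> sets borel"
    and r_meas: "r \<in> borel_measurable (param_space \<Theta>)"
    and r_pos: "\<forall>\<theta>'\<in>\<Theta>. r \<theta>' > 0"
    and prior_prob: "prob_space (prior \<Theta> r)"
    and P_kernel: "P \<in> measurable (param_space \<Theta>) (prob_algebra XM)"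
    and \<tau>_meas: "(\<lambda>(x, \<theta>'). \<tau> x \<theta>') \<in> borel_measurable (XM \<Otimes>\<^sub>M param_space \<Theta>)"
    and H_cont: "\<forall>\<theta>'\<in>\<Theta>. continuous_on UNIV (\<lambda>t. Hmodel P \<tau> t \<theta>')"
    and \<alpha>_range: "0 < \<alpha>" "\<alpha> < 1"
    and A_partition: "\<forall>B. \<forall>s\<in>space (sims \<Theta> r XM P B). \<forall>\<theta>'\<in>\<Theta>.
          \<theta>' \<in> A B s \<theta>' \<and> A B s \<theta>' \<subseteq> \<Theta> \<and> (\<forall>\<theta>''\<in>A B s \<theta>'. A B s \<theta>'' = A B s \<theta>')"
    and A_meas: "\<forall>B b \<theta>'. b < B \<longrightarrow> \<theta>' \<in> \<Theta> \<longrightarrow>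
          {s \<in> space (sims \<Theta> r XM P B). fst (s b) \<in> A B s \<theta>'} \<in> sets (sims \<Theta> r XM P B)"
    and consistency: "\<forall>\<epsilon>>0. \<forall>\<delta>>0. \<exists>B0. \<forall>B\<ge>B0.
          measure (sims \<Theta> r XM P B)
            {s \<in> space (sims \<Theta> r XM P B).
               \<forall>t. \<forall>\<theta>'\<in>\<Theta>. \<bar>Hhat \<tau> A B s t \<theta>' - Hmodel P \<tau> t \<theta>'\<bar> \<le> \<epsilon>} \<ge> 1 - \<delta>"
    and \<theta>_in: "\<theta> \<in> \<Theta>"
  shows "(\<lambda>B. measure (sims \<Theta> r XM P B \<Otimes>\<^sub>M P \<theta>)
            {(s, x) \<in> space (sims \<Theta> r XM P B \<Otimes>\<^sub>M P \<theta>). \<theta> \<in> Rhat \<Theta> \<tau> A \<alpha> B s x})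
         \<longlonglongrightarrow> 1 - \<alpha>"
proof -
  define PS where "PS = param_space \<Theta>"
  define N where "N = PS \<Otimes>\<^sub>M XM"
  define J where "J = joint \<Theta> r XM P"
  define S where "S = (\<lambda>B. sims \<Theta> r XM P B)"
  have spPS: "space PS = \<Theta>" by (simp add: PS_def param_space_def space_restrict_space)
  have Pprob: "prob_space (P \<theta>') \<and> sets (P \<theta>') = sets XM" if "\<theta>' \<in> \<Theta>" for \<theta>'
    using measurable_space[OF P_kernel, of \<theta>'] that
    by (auto simp: space_prob_algebra param_space_def space_restrict_space)
  have kern: "(\<lambda>\<theta>'. P \<theta>' \<bind> (\<lambda>x. return N (\<theta>', x))) \<in> PS \<rightarrow>\<^sub>M prob_algebra N"
    unfolding N_def by (rule measurable_bind_prob_space2[OF P_kernel[folded PS_def]]) (simp add: case_prod_eta measurable_return_prob_space)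
  have priorA: "prior \<Theta> r \<in> space (prob_algebra PS)"
    using prior_prob by (simp add: space_prob_algebra prior_def PS_def)
  have J_sets: "sets J = sets N" unfolding J_def joint_def
    using sets_bind'[OF priorA kern] by (simp add: N_def PS_def)
  have J_prob: "prob_space J" unfolding J_def joint_def
    using prob_space_bind'[OF priorA kern] by (simp add: N_def PS_def)
  have S_prob: "prob_space (S B)" for B unfolding S_def sims_def
    by (rule prob_space_PiM) (simp add: J_prob[unfolded J_def])
  have comp: "(\<lambda>s. s b) \<in> S B \<rightarrow>\<^sub>M J" if "b < B" for B b
    unfolding S_def sims_def J_def by (rule measurable_component_singleton) (simp add: that)
  have tauJ: "(\<lambda>p. \<tau> (snd p) (fst p)) \<in> borel_measurable J"
  proof -
    have "(\<lambda>p. (\<lambda>(x, \<theta>'). \<tau> x \<theta>') ((\<lambda>(x,y). (y,x)) p)) \<in> borel_measurable (param_space \<Theta> \<Otimes>\<^sub>M XM)"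
      by (rule measurable_compose[OF measurable_pair_swap' \<tau>_meas])
    then show ?thesis using J_sets unfolding N_def PS_def
      by (simp add: case_prod_beta cong: measurable_cong_sets)
  qed
  have tauS: "(\<lambda>s. \<tau> (snd (s b)) (fst (s b))) \<in> borel_measurable (S B)" if "b < B" for B b
    using measurable_compose[OF comp[OF that] tauJ] by simp
  have predA: "Measurable.pred (S B) (\<lambda>s. fst (s b) \<in> A B s \<theta>')" if "b < B" "\<theta>' \<in> \<Theta>" for B b \<theta>'
    unfolding S_def using A_meas[rule_format, OF that] by (rule iffD2[OF Measurable.pred_def])
  have cardI: "real (card (Iset A B s \<theta>')) = (\<Sum>b<B. if fst (s b) \<in> A B s \<theta>' then 1 else 0)" for B s \<theta>'
  proof -
    have "Iset A B s \<theta>' = {..<B} \<inter> {b. fst (s b) \<in> A B s \<theta>'}" by (auto simp: Iset_def)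
    then show ?thesis by (simp add: sum.If_cases)
  qed
  have cardF: "real (card {b \<in> Iset A B s \<theta>'. \<tau> (snd (s b)) (fst (s b)) \<le> t})
      = (\<Sum>b<B. if fst (s b) \<in> A B s \<theta>' \<and> \<tau> (snd (s b)) (fst (s b)) \<le> t then 1 else 0)" for B s \<theta>' t
  proof -
    have "{b \<in> Iset A B s \<theta>'. \<tau> (snd (s b)) (fst (s b)) \<le> t}
       = {..<B} \<inter> {b. fst (s b) \<in> A B s \<theta>' \<and> \<tau> (snd (s b)) (fst (s b)) \<le> t}" by (auto simp: Iset_def)
    then show ?thesis by (simp add: sum.If_cases)
  qed
  have HhatM: "(\<lambda>s. Hhat \<tau> A B s t \<theta>') \<in> borel_measurable (S B)" if "\<theta>' \<in> \<Theta>" for B t \<theta>'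
  proof -
    have 1: "(\<lambda>s. if fst (s b) \<in> A B s \<theta>' then 1 else 0 :: real) \<in> borel_measurable (S B)" if "b \<in> {..<B}" for b
    proof -
      have "Measurable.pred (S B) (\<lambda>s. fst (s b) \<in> A B s \<theta>')" using predA[of b B \<theta>'] that \<open>\<theta>' \<in> \<Theta>\<close> by simp
      then show ?thesis unfolding Measurable.pred_def by (intro measurable_If borel_measurable_const)
    qed
    have 2: "(\<lambda>s. if fst (s b) \<in> A B s \<theta>' \<and> \<tau> (snd (s b)) (fst (s b)) \<le> t then 1 else 0 :: real) \<in> borel_measurable (S B)" if "b \<in> {..<B}" for b
    proof -
      have p1: "Measurable.pred (S B) (\<lambda>s. fst (s b) \<in> A B s \<theta>')" using predA[of b B \<theta>'] that \<open>\<theta>' \<in> \<Theta>\<close> by simp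
      have m: "(\<lambda>s. \<tau> (snd (s b)) (fst (s b))) \<in> borel_measurable (S B)" using tauS[of b B] that by simp
      have p2: "Measurable.pred (S B) (\<lambda>s. \<tau> (snd (s b)) (fst (s b)) \<le> t)" using m by measurable
      have "Measurable.pred (S B) (\<lambda>s. fst (s b) \<in> A B s \<theta>' \<and> \<tau> (snd (s b)) (fst (s b)) \<le> t)"
        by (rule pred_intros_logic(3)[OF p1 p2])
      then show ?thesis unfolding Measurable.pred_def by (intro measurable_If borel_measurable_const)
    qed
    show ?thesis unfolding Hhat_def cardI cardF
      by (intro borel_measurable_divide borel_measurable_add borel_measurable_sum 1 2 borel_measurable_const)
  qed
  have Hmono: "Hhat \<tau> A B s t \<theta>' \<le> Hhat \<tau> A B s t' \<theta>'" if "t \<le> t'" for B s t t' \<theta>'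
  proof -
    have fin: "finite (Iset A B s \<theta>')" by (auto simp: Iset_def)
    have "card {b \<in> Iset A B s \<theta>'. \<tau> (snd (s b)) (fst (s b)) \<le> t} \<le> card {b \<in> Iset A B s \<theta>'. \<tau> (snd (s b)) (fst (s b)) \<le> t'}"
      by (rule card_mono) (use fin that in auto)
    then show ?thesis unfolding Hhat_def by (intro divide_right_mono) auto
  qed
  have Cchar: "Chat \<tau> A \<alpha> B s \<theta>' \<le> ereal y \<longleftrightarrow> (\<forall>q::rat. y < of_rat q \<longrightarrow> \<alpha> \<le> Hhat \<tau> A B s (of_rat q) \<theta>')" for B s \<theta>' y
    unfolding Chat_def by (rule Inf_ereal_le_iff) (meson Hmono order_trans)
  have Pth: "prob_space (P \<theta>)" "sets (P \<theta>) = sets XM" using Pprob[OF \<theta>_in] by auto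
  have taux: "(\<lambda>x. \<tau> x \<theta>) \<in> borel_measurable (P \<theta>)"
  proof -
    have "(\<lambda>x. (x, \<theta>)) \<in> XM \<rightarrow>\<^sub>M XM \<Otimes>\<^sub>M param_space \<Theta>"
    proof -
      have th: "\<theta> \<in> space (param_space \<Theta>)" using \<theta>_in spPS unfolding PS_def by simp
      show ?thesis by (rule measurable_Pair[OF measurable_ident_sets[OF refl] measurable_const[OF th]])
    qed
    from measurable_compose[OF this \<tau>_meas] show ?thesis using Pth by (simp cong: measurable_cong_sets)
  qed
  interpret Pt: prob_space "P \<theta>" by (rule Pth(1))
  define sec where "sec B s = {x \<in> space (P \<theta>). Chat \<tau> A \<alpha> B s \<theta> \<le> ereal (\<tau> x \<theta>)}" for B s
  define g where "g B s = measure (P \<theta>) (sec B s)" for B s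
  define E where "E B = {(s, x) \<in> space (S B \<Otimes>\<^sub>M P \<theta>). \<theta> \<in> Rhat \<Theta> \<tau> A \<alpha> B s x}" for B
  have Eeq: "E B = {p \<in> space (S B \<Otimes>\<^sub>M P \<theta>). \<forall>q::rat. \<tau> (snd p) \<theta> < of_rat q \<longrightarrow> \<alpha> \<le> Hhat \<tau> A B (fst p) (of_rat q) \<theta>}" for B
    unfolding E_def Rhat_def using \<theta>_in by (auto simp: Cchar)
  have Emeas: "E B \<in> sets (S B \<Otimes>\<^sub>M P \<theta>)" for B
  proof -
    note [measurable] = HhatM[OF \<theta>_in] taux
    show ?thesis unfolding Eeq by measurable
  qed
  have secE: "Pair s -` E B = sec B s" if "s \<in> space (S B)" for B s
    unfolding E_def sec_def Rhat_def using that \<theta>_in by (auto simp: space_pair_measure)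
  have emE: "emeasure (S B \<Otimes>\<^sub>M P \<theta>) (E B) = (\<integral>\<^sup>+ s. ennreal (g B s) \<partial>S B)" for B
    unfolding Pt.emeasure_pair_measure_alt[OF Emeas]
    by (rule nn_integral_cong) (simp add: secE g_def Pt.emeasure_eq_measure)
  have gM: "g B \<in> borel_measurable (S B)" for B
  proof -
    have "(\<lambda>s. emeasure (P \<theta>) (Pair s -` E B)) \<in> borel_measurable (S B)"
      by (rule Pt.measurable_emeasure_Pair[OF Emeas])
    then have "(\<lambda>s. emeasure (P \<theta>) (sec B s)) \<in> borel_measurable (S B)"
      by (rule measurable_cong[THEN iffD1, rotated]) (simp add: secE)
    then have "(\<lambda>s. enn2real (emeasure (P \<theta>) (sec B s))) \<in> borel_measurable (S B)"
      by (rule borel_measurable_enn2real)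
    then show ?thesis unfolding g_def measure_def .
  qed
  have g01: "0 \<le> g B s" "g B s \<le> 1" for B s unfolding g_def by auto
  have intg: "integrable (S B) (g B)" for B
  proof -
    interpret SB: prob_space "S B" by (rule S_prob)
    show ?thesis by (rule SB.integrable_const_bound[where B=1]) (use g01 gM in auto)
  qed
  have mE: "measure (S B \<Otimes>\<^sub>M P \<theta>) (E B) = (\<integral>s. g B s \<partial>S B)" for B
  proof -
    have "emeasure (S B \<Otimes>\<^sub>M P \<theta>) (E B) = ennreal (\<integral>s. g B s \<partial>S B)"
      unfolding emE by (rule nn_integral_eq_integral[OF intg]) (use g01 in auto)
    then show ?thesis unfolding measure_def by (simp add: g01 integral_nonneg)
  qed
  have goal_eq: "(\<lambda>B. measure (sims \<Theta> r XM P B \<Otimes>\<^sub>M P \<theta>)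
            {(s, x) \<in> space (sims \<Theta> r XM P B \<Otimes>\<^sub>M P \<theta>). \<theta> \<in> Rhat \<Theta> \<tau> A \<alpha> B s x})
       = (\<lambda>B. \<integral>s. g B s \<partial>S B)"
    using mE unfolding E_def S_def by simp
  show ?thesis unfolding goal_eq
  proof (rule LIMSEQ_I)
    fix e :: real assume e: "0 < e"
    define \<epsilon> where "\<epsilon> = min (e/8) (min (\<alpha>/2) ((1-\<alpha>)/2))"
    define \<delta> where "\<delta> = min (e/4) (1/2)"
    have \<epsilon>1: "\<epsilon> \<le> (1-\<alpha>)/2" "\<epsilon> \<le> \<alpha>/2" "\<epsilon> \<le> e/8" "0 < \<epsilon>" using e \<alpha>_range unfolding \<epsilon>_def by (auto simp: min_def)
    have \<epsilon>: "0 < \<epsilon>" "\<epsilon> < \<alpha>" "\<alpha> + \<epsilon> < 1" "\<epsilon> \<le> e/8" using \<epsilon>1 \<alpha>_range by auto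
    have \<delta>: "0 < \<delta>" "\<delta> < 1" "\<delta> \<le> e/4" using e unfolding \<delta>_def by auto
    obtain B0 where B0: "\<And>B. B \<ge> B0 \<Longrightarrow> measure (S B) {s \<in> space (S B).
               \<forall>t. \<forall>\<theta>'\<in>\<Theta>. \<bar>Hhat \<tau> A B s t \<theta>' - Hmodel P \<tau> t \<theta>'\<bar> \<le> \<epsilon>} \<ge> 1 - \<delta>"
      using consistency \<epsilon>(1) \<delta>(1) unfolding S_def by blast
    have "norm ((\<integral>s. g B s \<partial>S B) - (1 - \<alpha>)) < e" if B: "B \<ge> B0" for B
    proof -
      interpret SB: prob_space "S B" by (rule S_prob)
      define G where "G = {s \<in> space (S B). \<forall>t. \<forall>\<theta>'\<in>\<Theta>. \<bar>Hhat \<tau> A B s t \<theta>' - Hmodel P \<tau> t \<theta>'\<bar> \<le> \<epsilon>}"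
      have mG: "SB.prob G \<ge> 1 - \<delta>" using B0[OF B] unfolding G_def .
      have Gs: "G \<in> SB.events"
      proof (rule ccontr)
        assume "G \<notin> SB.events"
        then have "SB.prob G = 0" by (rule measure_notin_sets)
        then show False using mG \<delta> by simp
      qed
      have gG: "1 - \<alpha> - \<epsilon> \<le> g B s \<and> g B s \<le> 1 - \<alpha> + 2 * \<epsilon>" if "s \<in> G" for s
      proof -
        have cl: "\<bar>Hhat \<tau> A B s t \<theta> - Hmodel P \<tau> t \<theta>\<bar> \<le> \<epsilon>" for t using that \<theta>_in unfolding G_def by blast
        note k = Pt.key[OF taux, of "\<lambda>t. Hmodel P \<tau> t \<theta>" "\<lambda>t. Hhat \<tau> A B s t \<theta>" \<epsilon> \<alpha>]
        have "1 - \<alpha> - \<epsilon> \<le> g B s" unfolding g_def sec_def Chat_def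
          by (rule k(1)) (use Hmono cl \<epsilon> H_cont \<theta>_in in \<open>auto simp: Hmodel_def\<close>)
        moreover have "g B s \<le> 1 - \<alpha> + 2 * \<epsilon>" unfolding g_def sec_def Chat_def
          by (rule k(2)) (use Hmono cl \<epsilon> H_cont \<theta>_in in \<open>auto simp: Hmodel_def\<close>)
        ultimately show ?thesis by simp
      qed
      have iG: "integrable (S B) (indicator G :: _ \<Rightarrow> real)"
        by (rule integrable_real_indicator[OF Gs]) (simp add: SB.emeasure_finite less_top[symmetric])
      have iGc: "integrable (S B) (indicator (space (S B) - G) :: _ \<Rightarrow> real)"
        by (rule integrable_real_indicator) (use Gs in \<open>auto simp: SB.emeasure_finite less_top[symmetric]\<close>)
      have c0: "0 \<le> 1 - \<alpha> - \<epsilon>" using \<epsilon> by simp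
      have "(\<integral>s. (1 - \<alpha> - \<epsilon>) * indicator G s \<partial>S B) \<le> (\<integral>s. g B s \<partial>S B)"
      proof (rule integral_mono)
        show "integrable (S B) (\<lambda>s. (1 - \<alpha> - \<epsilon>) * indicator G s)" using iG by simp
        show "integrable (S B) (g B)" by (rule intg)
        fix s assume "s \<in> space (S B)"
        then show "(1 - \<alpha> - \<epsilon>) * indicator G s \<le> g B s" using gG[of s] g01[of B s]
          by (cases "s \<in> G") auto
      qed
      moreover have "(\<integral>s. (1 - \<alpha> - \<epsilon>) * indicator G s \<partial>S B) = (1 - \<alpha> - \<epsilon>) * SB.prob G"
        using Gs by simp
      moreover have "(1 - \<alpha> - \<epsilon>) * SB.prob G \<ge> (1 - \<alpha> - \<epsilon>) * (1 - \<delta>)"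
        using mG c0 by (rule mult_left_mono)
      moreover have "(1 - \<alpha> - \<epsilon>) * (1 - \<delta>) \<ge> 1 - \<alpha> - \<epsilon> - \<delta>"
        using \<epsilon> \<delta> \<alpha>_range by (simp add: algebra_simps)
      ultimately have low: "1 - \<alpha> - \<epsilon> - \<delta> \<le> (\<integral>s. g B s \<partial>S B)" by linarith
      have "(\<integral>s. g B s \<partial>S B) \<le> (\<integral>s. (1 - \<alpha> + 2 * \<epsilon>) + indicator (space (S B) - G) s \<partial>S B)"
      proof (rule integral_mono)
        show "integrable (S B) (\<lambda>s. (1 - \<alpha> + 2 * \<epsilon>) + indicator (space (S B) - G) s)" using iGc by simp
        show "integrable (S B) (g B)" by (rule intg)
        fix s assume "s \<in> space (S B)"
        then show "g B s \<le> (1 - \<alpha> + 2 * \<epsilon>) + indicator (space (S B) - G) s" using gG[of s] g01[of B s] \<epsilon> \<alpha>_range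
          by (cases "s \<in> G") auto
      qed
      moreover have "(\<integral>s. (1 - \<alpha> + 2 * \<epsilon>) + indicator (space (S B) - G) s \<partial>S B) = (1 - \<alpha> + 2 * \<epsilon>) + SB.prob (space (S B) - G)"
        using iGc Gs by (simp add: SB.prob_space)
      moreover have "SB.prob (space (S B) - G) = 1 - SB.prob G" using SB.prob_compl[OF Gs] .
      ultimately have up: "(\<integral>s. g B s \<partial>S B) \<le> 1 - \<alpha> + 2 * \<epsilon> + \<delta>" using mG by linarith
      show ?thesis using low up \<epsilon> \<delta> e by (simp add: abs_less_iff)
    qed
    then show "\<exists>no. \<forall>n\<ge>no. norm ((\<integral>s. g n s \<partial>S n) - (1 - \<alpha>)) < e" by blast
  qed
qed

end
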